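(* Let $T$ be a tree and $g,h$ isometries of $T$. The product $gh$ is elliptic if and only if one of the following holds: (1) $g$ and $h$ are both elliptic and $\mathrm{Fix}(g)\cap\mathrm{Fix}(h)\neq\emptyset$; (2) $\tau(h)<\tau(g)$ (so $g$ is loxodromic) and $h$ creases an arc of $A(g)$ of length at least $\tfrac12(\tau(g)-\tau(h))$ in the negative direction; or the same situation with the roles of $g$ and $h$ exchanged; (3) $g$ and $h$ are both loxodromic, $\tau(g)=\tau(h)\le\ell(A(g)\cap A(h))$, and $g,h$ translate in opposite directions along $A(g)\cap A(h)$.
   Context: $T$ is a simplicial tree (with its path metric, edges of length 1) or a real tree. An isometry $g$ is elliptic if it fixes a point; $\mathrm{Fix}(g)$ is its fixed-point set and $\tau(g)=0$. Otherwise $g$ is loxodromic: it preserves a unique bi-infinite geodesic $A(g)$ (its axis) and translates along it by $\tau(g)>0$ (translation length). An arc is a geodesic segment; $\ell(\alpha)$ denotes its length. Two oriented arcs whose union lies in a single arc are coherent if their orientations are restrictions of one orientation of an arc containing both, and incoherent otherwise. An isometry $h$ creases an arc $\alpha$ of an arc or geodesic $\gamma$ if $\alpha\cup h\alpha\subseteq\gamma$, $\alpha$ and $h\alpha$ share at most an endpoint, and for an orientation $\vec\alpha$ the arcs $\vec\alpha$ and $h\vec\alpha$ are incoherent. When $\gamma=A(g)$ is oriented in the direction of translation of $g$, $h$ creases $\alpha$ in the negative direction if moreover $h\alpha$ precedes $\alpha$ along $A(g)$. *)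

theory Defs
  imports Complex_Main "HOL-Library.Extended_Real"
begin

text \<open>Real trees (this covers simplicial trees via their metric realisation).
  A tree is a subset T of a metric space.\<close>

definition is_segment :: "'a::metric_space set \<Rightarrow> 'a \<Rightarrow> 'a \<Rightarrow> 'a set \<Rightarrow> bool" where
  "is_segment T x y S \<longleftrightarrow>
     (\<exists>\<gamma>::real \<Rightarrow> 'a. \<gamma> 0 = x \<and> \<gamma> (dist x y) = y \<and>
        (\<forall>s\<in>{0..dist x y}. \<forall>t\<in>{0..dist x y}. dist (\<gamma> s) (\<gamma> t) = \<bar>s - t\<bar>) \<and>
        S = \<gamma> ` {0..dist x y} \<and> S \<subseteq> T)"

definition seg :: "'a::metric_space set \<Rightarrow> 'a \<Rightarrow> 'a \<Rightarrow> 'a set" where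
  "seg T x y = (THE S. is_segment T x y S)"

definition real_tree :: "'a::metric_space set \<Rightarrow> bool" where
  "real_tree T \<longleftrightarrow> T \<noteq> {} \<and>
     (\<forall>x\<in>T. \<forall>y\<in>T. \<exists>!S. is_segment T x y S) \<and>
     (\<forall>x\<in>T. \<forall>y\<in>T. \<forall>z\<in>T. seg T x y \<inter> seg T y z = {y} \<longrightarrow>
         seg T x y \<union> seg T y z = seg T x z)"

definition isometry :: "'a::metric_space set \<Rightarrow> ('a \<Rightarrow> 'a) \<Rightarrow> bool" where
  "isometry T g \<longleftrightarrow> g ` T = T \<and> (\<forall>x\<in>T. \<forall>y\<in>T. dist (g x) (g y) = dist x y)"

definition Fix :: "'a set \<Rightarrow> ('a \<Rightarrow> 'a) \<Rightarrow> 'a set" where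
  "Fix T g = {x\<in>T. g x = x}"

definition elliptic :: "'a set \<Rightarrow> ('a \<Rightarrow> 'a) \<Rightarrow> bool" where
  "elliptic T g \<longleftrightarrow> Fix T g \<noteq> {}"

definition loxodromic :: "'a set \<Rightarrow> ('a \<Rightarrow> 'a) \<Rightarrow> bool" where
  "loxodromic T g \<longleftrightarrow> \<not> elliptic T g"

definition axis_param :: "'a::metric_space set \<Rightarrow> ('a \<Rightarrow> 'a) \<Rightarrow> (real \<Rightarrow> 'a) \<Rightarrow> real \<Rightarrow> bool" where
  "axis_param T g \<gamma> \<tau> \<longleftrightarrow> \<tau> > 0 \<and> range \<gamma> \<subseteq> T \<and>
     (\<forall>s t. dist (\<gamma> s) (\<gamma> t) = \<bar>s - t\<bar>) \<and> (\<forall>t. g (\<gamma> t) = \<gamma> (t + \<tau>))"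

definition axis :: "'a::metric_space set \<Rightarrow> ('a \<Rightarrow> 'a) \<Rightarrow> 'a set" where
  "axis T g = (THE A. \<exists>\<gamma> \<tau>. axis_param T g \<gamma> \<tau> \<and> A = range \<gamma>)"

definition transl_len :: "'a::metric_space set \<Rightarrow> ('a \<Rightarrow> 'a) \<Rightarrow> real" where
  "transl_len T g = (if elliptic T g then 0 else (THE \<tau>. \<exists>\<gamma>. axis_param T g \<gamma> \<tau>))"

text \<open>Length of a geodesic subset (arc, ray, line) = its diameter, in the extended reals.\<close>
definition arc_len :: "'a::metric_space set \<Rightarrow> ereal" where
  "arc_len S = (SUP x\<in>S. SUP y\<in>S. ereal (dist x y))"

text \<open>With A(g) parametrised by \<gamma> in the direction of translation,
  \<alpha> = \<gamma>[a,b]; h\<alpha> = \<gamma>[c, c+(b-a)] lies in A(g), precedes \<alpha> (sharing at most the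
  endpoint), and h reverses the orientation (incoherence).\<close>
definition creases_neg :: "'a::metric_space set \<Rightarrow> ('a \<Rightarrow> 'a) \<Rightarrow> ('a \<Rightarrow> 'a) \<Rightarrow> real \<Rightarrow> bool" where
  "creases_neg T g h L \<longleftrightarrow>
     (\<exists>\<gamma> \<tau> a b c. axis_param T g \<gamma> \<tau> \<and> a \<le> b \<and> L \<le> b - a \<and> c + (b - a) \<le> a \<and>
        (\<forall>s\<in>{0..b - a}. h (\<gamma> (a + s)) = \<gamma> (c + (b - a) - s)))"

definition opposite_directions :: "'a::metric_space set \<Rightarrow> ('a \<Rightarrow> 'a) \<Rightarrow> ('a \<Rightarrow> 'a) \<Rightarrow> bool" where
  "opposite_directions T g h \<longleftrightarrow>
     (\<exists>\<gamma> \<sigma> \<delta> \<rho>. axis_param T g \<gamma> \<sigma> \<and> axis_param T h \<delta> \<rho> \<and>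
        (\<forall>s t u v. \<gamma> s = \<delta> u \<and> \<gamma> t = \<delta> v \<and> s < t \<longrightarrow> v < u))"

end

theory Submission
  imports Defs
begin


definition btw :: "'a::metric_space \<Rightarrow> 'a \<Rightarrow> 'a \<Rightarrow> bool" where
  "btw x z y \<longleftrightarrow> dist x z + dist z y = dist x y"

locale rtree =
  fixes T :: "'a::metric_space set"
  assumes rt: "real_tree T"
begin

lemma seg_is: "x \<in> T \<Longrightarrow> y \<in> T \<Longrightarrow> is_segment T x y (seg T x y)"
  using rt unfolding real_tree_def seg_def by (metis theI')

lemma seg_uniq: "x \<in> T \<Longrightarrow> y \<in> T \<Longrightarrow> is_segment T x y S \<Longrightarrow> S = seg T x y"
  using rt seg_is unfolding real_tree_def by metis

lemma seg_param: assumes "x \<in> T" "y \<in> T"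
  obtains \<sigma> where "\<sigma> 0 = x" "\<sigma> (dist x y) = y"
    "\<And>s t. s\<in>{0..dist x y} \<Longrightarrow> t\<in>{0..dist x y} \<Longrightarrow> dist (\<sigma> s) (\<sigma> t) = \<bar>s - t\<bar>"
    "seg T x y = \<sigma> ` {0..dist x y}" "seg T x y \<subseteq> T"
  using seg_is[OF assms] unfolding is_segment_def by metis

lemma seg_btw: assumes "x \<in> T" "y \<in> T" "v \<in> seg T x y"
  shows "btw x v y" "v \<in> T"
proof -
  obtain \<sigma> where s: "\<sigma> 0 = x" "\<sigma> (dist x y) = y"
    "\<And>s t. s\<in>{0..dist x y} \<Longrightarrow> t\<in>{0..dist x y} \<Longrightarrow> dist (\<sigma> s) (\<sigma> t) = \<bar>s - t\<bar>"
    "seg T x y = \<sigma> ` {0..dist x y}" "seg T x y \<subseteq> T"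
    using seg_param[OF assms(1,2)] by blast
  obtain r where r: "r \<in> {0..dist x y}" "v = \<sigma> r" using assms(3) s(4) by auto
  have "dist x v = r" using s(1) s(3)[of 0 r] r by auto
  moreover have "dist v y = dist x y - r" using s(2) s(3)[of r "dist x y"] r by auto
  ultimately show "btw x v y" unfolding btw_def by simp
  show "v \<in> T" using assms(3) s(5) by auto
qed

lemma param_pt: assumes "\<sigma> 0 = x"
    "\<And>s t. s\<in>{0..D} \<Longrightarrow> t\<in>{0..D} \<Longrightarrow> dist (\<sigma> s) (\<sigma> t) = \<bar>s - t\<bar>"
    "v \<in> \<sigma> ` {0..D}"
  shows "v = \<sigma> (dist x v)" "dist x v \<in> {0..D}"
proof -
  obtain r where r: "r \<in> {0..D}" "v = \<sigma> r" using assms(3) by auto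
  have "dist x v = r" using assms(1) assms(2)[of 0 r] r by auto
  thus "v = \<sigma> (dist x v)" "dist x v \<in> {0..D}" using r by auto
qed

lemma btw_seg: assumes "x \<in> T" "y \<in> T" "z \<in> T" "btw x z y"
  shows "z \<in> seg T x y"
proof -
  define a where "a = dist x z"
  define b where "b = dist z y"
  have ab: "a + b = dist x y" using assms(4) unfolding btw_def a_def b_def by simp
  obtain \<alpha> where al: "\<alpha> 0 = x" "\<alpha> a = z"
    "\<And>s t. s\<in>{0..a} \<Longrightarrow> t\<in>{0..a} \<Longrightarrow> dist (\<alpha> s) (\<alpha> t) = \<bar>s - t\<bar>"
    "seg T x z = \<alpha> ` {0..a}" "seg T x z \<subseteq> T"
    using seg_param[OF assms(1,3)] unfolding a_def by blast
  obtain \<beta> where be: "\<beta> 0 = z" "\<beta> b = y"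
    "\<And>s t. s\<in>{0..b} \<Longrightarrow> t\<in>{0..b} \<Longrightarrow> dist (\<beta> s) (\<beta> t) = \<bar>s - t\<bar>"
    "seg T z y = \<beta> ` {0..b}" "seg T z y \<subseteq> T"
    using seg_param[OF assms(3,2)] unfolding b_def by blast
  have a0: "a \<ge> 0" "b \<ge> 0" unfolding a_def b_def by auto
  define \<gamma> where "\<gamma> t = (if t \<le> a then \<alpha> t else \<beta> (t - a))" for t
  have cross: "dist (\<alpha> s) (\<beta> (t - a)) = t - s" if "s \<in> {0..a}" "t \<in> {a..a+b}" for s t
  proof -
    have d1: "dist x (\<alpha> s) = s" using al(1) al(3)[of 0 s] that a0 by auto
    have d2: "dist (\<alpha> s) z = a - s" using al(2) al(3)[of s a] that a0 by auto
    have d3: "dist z (\<beta> (t-a)) = t - a" using be(1) be(3)[of 0 "t-a"] that a0 by auto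
    have d4: "dist (\<beta> (t-a)) y = b - (t - a)" using be(2) be(3)[of "t-a" b] that a0 by auto
    have "dist x y \<le> dist x (\<alpha> s) + dist (\<alpha> s) (\<beta> (t - a)) + dist (\<beta> (t - a)) y"
      by (metis dist_triangle order_trans add_right_mono)
    moreover have "dist (\<alpha> s) (\<beta> (t - a)) \<le> dist (\<alpha> s) z + dist z (\<beta> (t-a))"
      by (rule dist_triangle)
    ultimately show ?thesis using d1 d2 d3 d4 ab by linarith
  qed
  have iso: "dist (\<gamma> s) (\<gamma> t) = \<bar>s - t\<bar>" if "s \<in> {0..dist x y}" "t \<in> {0..dist x y}" for s t
  proof (cases "s \<le> a"; cases "t \<le> a")
    assume "s \<le> a" "t \<le> a" thus ?thesis using that al(3) unfolding \<gamma>_def by auto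
  next
    assume "s \<le> a" "\<not> t \<le> a" thus ?thesis using that cross[of s t] ab unfolding \<gamma>_def by auto
  next
    assume "\<not> s \<le> a" "t \<le> a" thus ?thesis using that cross[of t s] ab unfolding \<gamma>_def
      by (auto simp: dist_commute)
  next
    assume "\<not> s \<le> a" "\<not> t \<le> a" thus ?thesis using that be(3)[of "s-a" "t-a"] ab unfolding \<gamma>_def by auto
  qed
  have g0: "\<gamma> 0 = x" using al(1) a0 unfolding \<gamma>_def by auto
  have gd: "\<gamma> (dist x y) = y"
  proof (cases "b = 0")
    case True
    hence "z = y" using b_def by simp
    thus ?thesis using al(2) ab True unfolding \<gamma>_def by auto
  next
    case False
    have "\<not> dist x y \<le> a" using False a0 ab by linarith
    hence "\<gamma> (dist x y) = \<beta> (dist x y - a)" unfolding \<gamma>_def by simp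
    also have "dist x y - a = b" using ab by simp
    finally show ?thesis using be(2) by simp
  qed
  have sub: "\<gamma> ` {0..dist x y} \<subseteq> T"
  proof
    fix v assume "v \<in> \<gamma> ` {0..dist x y}"
    then obtain t where t: "t \<in> {0..dist x y}" "v = \<gamma> t" by auto
    show "v \<in> T"
    proof (cases "t \<le> a")
      case True thus ?thesis using t al(4,5) unfolding \<gamma>_def by auto
    next
      case False thus ?thesis using t be(4,5) ab unfolding \<gamma>_def by auto
    qed
  qed
  have "is_segment T x y (\<gamma> ` {0..dist x y})"
    unfolding is_segment_def using g0 gd iso sub by blast
  hence "\<gamma> ` {0..dist x y} = seg T x y" using seg_uniq assms by blast
  moreover have "\<gamma> a = z" using al(2) unfolding \<gamma>_def by simp
  ultimately show ?thesis using ab a0 by force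
qed

lemma self_seg: "x \<in> T \<Longrightarrow> y \<in> T \<Longrightarrow> y \<in> seg T x y" "x \<in> T \<Longrightarrow> y \<in> T \<Longrightarrow> x \<in> seg T x y"
  using btw_seg[of x y y] btw_seg[of x y x] unfolding btw_def by auto

lemma gluing: "x \<in> T \<Longrightarrow> y \<in> T \<Longrightarrow> z \<in> T \<Longrightarrow> seg T x y \<inter> seg T y z = {y} \<Longrightarrow>
  seg T x y \<union> seg T y z = seg T x z"
  using rt unfolding real_tree_def by blast

lemma center: assumes "x \<in> T" "y \<in> T" "w \<in> T"
  shows "\<exists>c\<in>T. btw x c y \<and> btw x c w \<and> btw y c w"
proof -
  obtain \<sigma> where s: "\<sigma> 0 = x" "\<sigma> (dist x y) = y"
    "\<And>s t. s\<in>{0..dist x y} \<Longrightarrow> t\<in>{0..dist x y} \<Longrightarrow> dist (\<sigma> s) (\<sigma> t) = \<bar>s - t\<bar>"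
    "seg T x y = \<sigma> ` {0..dist x y}" "seg T x y \<subseteq> T"
    using seg_param[OF assms(1,2)] by blast
  obtain \<rho> where r: "\<rho> 0 = x" "\<rho> (dist x w) = w"
    "\<And>s t. s\<in>{0..dist x w} \<Longrightarrow> t\<in>{0..dist x w} \<Longrightarrow> dist (\<rho> s) (\<rho> t) = \<bar>s - t\<bar>"
    "seg T x w = \<rho> ` {0..dist x w}" "seg T x w \<subseteq> T"
    using seg_param[OF assms(1,3)] by blast
  define m where "m = min (dist x y) (dist x w)"
  define I where "I = {t \<in> {0..m}. \<sigma> t = \<rho> t}"
  have I0: "0 \<in> I" using s(1) r(1) unfolding I_def m_def by auto
  have Ib: "\<And>t. t \<in> I \<Longrightarrow> t \<le> m" unfolding I_def by auto
  define ts where "ts = Sup I"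
  have tsI: "\<And>t. t \<in> I \<Longrightarrow> t \<le> ts" unfolding ts_def using Ib by (meson bdd_above_def cSup_upper)
  have tsm: "ts \<le> m" unfolding ts_def using I0 Ib by (intro cSup_least) auto
  have ts0: "0 \<le> ts" using tsI I0 by auto
  have eq: "\<sigma> ts = \<rho> ts"
  proof -
    have E: "dist (\<sigma> ts) (\<rho> ts) \<le> 2 * e" if "e > 0" for e
    proof -
      have "ts - e < Sup I" using that unfolding ts_def by simp
      then obtain t where t: "t \<in> I" "ts - e < t" using I0 less_cSupE[of "ts - e" I] by blast
      have tr: "t \<in> {0..m}" "\<sigma> t = \<rho> t" using t unfolding I_def by auto
      have "dist (\<sigma> ts) (\<rho> ts) \<le> dist (\<sigma> ts) (\<sigma> t) + dist (\<rho> t) (\<rho> ts)"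
        using tr(2) by (metis dist_triangle)
      also have "\<dots> = \<bar>ts - t\<bar> + \<bar>t - ts\<bar>"
        using s(3)[of ts t] r(3)[of t ts] tr(1) ts0 tsm unfolding m_def by auto
      finally show ?thesis using t tsI by auto
    qed
    have "\<not> dist (\<sigma> ts) (\<rho> ts) > 0"
    proof
      assume p: "dist (\<sigma> ts) (\<rho> ts) > 0"
      from E[of "dist (\<sigma> ts) (\<rho> ts) / 4"] p show False by simp
    qed
    thus ?thesis by simp
  qed
  define c where "c = \<sigma> ts"
  have c_xy: "c \<in> seg T x y" using s(4) ts0 tsm unfolding c_def m_def by auto
  have c_xw: "c \<in> seg T x w" using r(4) ts0 tsm eq unfolding c_def m_def by auto
  have cT: "c \<in> T" using c_xy s(5) by auto
  have dxc: "dist x c = ts" using s(1) s(3)[of 0 ts] ts0 tsm unfolding c_def m_def by auto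
  have bxy: "btw x c y" using seg_btw[OF assms(1,2) c_xy] by simp
  have bxw: "btw x c w" using seg_btw[OF assms(1,3) c_xw] by simp
  have inter: "seg T y c \<inter> seg T c w = {c}"
  proof
    show "{c} \<subseteq> seg T y c \<inter> seg T c w" using self_seg cT assms by auto
    show "seg T y c \<inter> seg T c w \<subseteq> {c}"
    proof
      fix v assume v: "v \<in> seg T y c \<inter> seg T c w"
      have vT: "v \<in> T" using seg_btw(2)[OF assms(2) cT] v by auto
      have b1: "btw y v c" using seg_btw(1)[OF assms(2) cT] v by auto
      have b2: "btw c v w" using seg_btw(1)[OF cT assms(3)] v by auto
      have t1: "dist x y \<le> dist x v + dist v y" "dist x v \<le> dist x c + dist c v"
        "dist x w \<le> dist x v + dist v w" by (rule dist_triangle)+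
      have e1: "dist x v = dist x c + dist c v"
        using b1 bxy t1 unfolding btw_def by (simp add: dist_commute)
      have vy: "btw x v y" using b1 bxy t1 e1 unfolding btw_def by (simp add: dist_commute)
      have vw: "btw x v w" using b2 bxw t1 e1 unfolding btw_def by (simp add: dist_commute)
      have v1: "v = \<sigma> (dist x v)" "dist x v \<in> {0..dist x y}"
        using param_pt[of \<sigma> x "dist x y" v] s btw_seg[OF assms(1,2) vT vy] by auto
      have v2: "v = \<rho> (dist x v)" "dist x v \<in> {0..dist x w}"
        using param_pt[of \<rho> x "dist x w" v] r btw_seg[OF assms(1,3) vT vw] by auto
      have "dist x v \<in> I" unfolding I_def m_def using v1 v2 by auto
      hence "dist x v \<le> ts" by (rule tsI)
      hence "dist c v = 0" using e1 dxc by simp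
      thus "v \<in> {c}" by simp
    qed
  qed
  have "c \<in> seg T y w" using gluing[OF assms(2) cT assms(3) inter] self_seg(1)[OF assms(2) cT] by auto
  hence "btw y c w" using seg_btw[OF assms(2,3)] by simp
  thus ?thesis using cT bxy bxw by blast
qed

end



context rtree begin

lemma seg_order: assumes "x \<in> T" "w \<in> T" "c1 \<in> T" "c2 \<in> T" "btw x c1 w" "btw x c2 w"
  "dist x c1 \<le> dist x c2" shows "btw x c1 c2"
proof -
  obtain \<rho> where r: "\<rho> 0 = x" "\<rho> (dist x w) = w"
    "\<And>s t. s\<in>{0..dist x w} \<Longrightarrow> t\<in>{0..dist x w} \<Longrightarrow> dist (\<rho> s) (\<rho> t) = \<bar>s - t\<bar>"
    "seg T x w = \<rho> ` {0..dist x w}" "seg T x w \<subseteq> T"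
    using seg_param[OF assms(1,2)] by blast
  have 1: "c1 = \<rho> (dist x c1)" "dist x c1 \<in> {0..dist x w}"
    using param_pt[of \<rho> x "dist x w" c1] r btw_seg[OF assms(1,2,3,5)] by auto
  have 2: "c2 = \<rho> (dist x c2)" "dist x c2 \<in> {0..dist x w}"
    using param_pt[of \<rho> x "dist x w" c2] r btw_seg[OF assms(1,2,4,6)] by auto
  have "dist c1 c2 = \<bar>dist x c1 - dist x c2\<bar>" using r(3)[OF 1(2) 2(2)] 1(1) 2(1) by metis
  thus ?thesis unfolding btw_def using assms(7) by simp
qed

lemma FP: assumes "x \<in> T" "y \<in> T" "z \<in> T" "w \<in> T"
  shows "dist y z + dist x w \<le> max (dist x y + dist z w) (dist x z + dist y w)"
proof -
  obtain c1 where c1: "c1 \<in> T" "btw x c1 y" "btw x c1 w" "btw y c1 w" using center[OF assms(1,2,4)] by blast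
  obtain c2 where c2: "c2 \<in> T" "btw x c2 z" "btw x c2 w" "btw z c2 w" using center[OF assms(1,3,4)] by blast
  have tri: "dist y z \<le> dist y c1 + dist c1 z" "dist y z \<le> dist y c2 + dist c2 z"
    "dist x z \<le> dist x c1 + dist c1 z" "dist x y \<le> dist x c2 + dist c2 y"
    "dist c1 z \<le> dist c1 c2 + dist c2 z" "dist c2 y \<le> dist c2 c1 + dist c1 y"
    by (rule dist_triangle)+
  show ?thesis
  proof (cases "dist x c1 \<le> dist x c2")
    case True
    have "btw x c1 c2" using seg_order[OF assms(1,4) c1(1) c2(1) c1(3) c2(3) True] .
    thus ?thesis using c1 c2 tri unfolding btw_def by (simp add: dist_commute)
  next
    case False
    have "btw x c2 c1" using seg_order[OF assms(1,4) c2(1) c1(1) c2(3) c1(3)] False by simp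
    thus ?thesis using c1 c2 tri unfolding btw_def by (simp add: dist_commute)
  qed
qed

lemma uniq: assumes "x \<in> T" "y \<in> T" "z \<in> T" "w \<in> T" "btw x z y" "btw x w y" "dist x z = dist x w"
  shows "z = w"
proof -
  have "dist z w + dist x y \<le> max (dist x z + dist w y) (dist x w + dist z y)"
    using FP[OF assms(1,3,4,2)] by (simp add: dist_commute)
  thus ?thesis using assms(5-7) unfolding btw_def by simp
qed

lemma segdist: assumes "x \<in> T" "y \<in> T" "z \<in> T" "w \<in> T" "btw x z y" "btw x w y"
  shows "dist z w = \<bar>dist x z - dist x w\<bar>"
proof -
  have "dist z w + dist x y \<le> max (dist x z + dist w y) (dist x w + dist z y)"
    using FP[OF assms(1,3,4,2)] by (simp add: dist_commute)
  moreover have "dist x z \<le> dist x w + dist w z" "dist x w \<le> dist x z + dist z w"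
    by (rule dist_triangle)+
  ultimately show ?thesis using assms(5,6) unfolding btw_def by (auto simp: dist_commute)
qed

lemma pt_ex: assumes "x \<in> T" "y \<in> T" "0 \<le> r" "r \<le> dist x y"
  shows "\<exists>z\<in>T. dist x z = r \<and> dist z y = dist x y - r"
proof -
  obtain \<sigma> where s: "\<sigma> 0 = x" "\<sigma> (dist x y) = y"
    "\<And>s t. s\<in>{0..dist x y} \<Longrightarrow> t\<in>{0..dist x y} \<Longrightarrow> dist (\<sigma> s) (\<sigma> t) = \<bar>s - t\<bar>"
    "seg T x y = \<sigma> ` {0..dist x y}" "seg T x y \<subseteq> T"
    using seg_param[OF assms(1,2)] by blast
  have "\<sigma> r \<in> T" using s(4,5) assms by auto
  moreover have "dist x (\<sigma> r) = r" using s(1) s(3)[of 0 r] assms by auto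
  moreover have "dist (\<sigma> r) y = dist x y - r" using s(2) s(3)[of r "dist x y"] assms by auto
  ultimately show ?thesis by blast
qed

lemma FPg: assumes "x \<in> T" "y \<in> T" "z \<in> T" "w \<in> T"
  shows "dist x y + dist x z - dist y z \<ge> min (dist x y + dist x w - dist y w) (dist x z + dist x w - dist z w)"
  using FP[OF assms] by (auto simp: dist_commute)

end



lemma iso_T: "isometry T f \<Longrightarrow> x \<in> T \<Longrightarrow> f x \<in> T"
  unfolding isometry_def by blast
lemma iso_d: "isometry T f \<Longrightarrow> x \<in> T \<Longrightarrow> y \<in> T \<Longrightarrow> dist (f x) (f y) = dist x y"
  unfolding isometry_def by blast

context rtree begin

lemma ell_mid: assumes f: "isometry T f" and p: "p \<in> T" "f p = p" and x: "x \<in> T"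
  shows "\<exists>m\<in>T. f m = m \<and> dist x m = dist x (f x) / 2 \<and> dist m (f x) = dist x (f x) / 2"
proof -
  have fx: "f x \<in> T" using iso_T[OF f x] .
  obtain c where c: "c \<in> T" "btw p c x" "btw p c (f x)" "btw x c (f x)" using center[OF p(1) x fx] by blast
  have fc: "f c \<in> T" using iso_T[OF f c(1)] .
  have d1: "dist p (f c) = dist p c" using iso_d[OF f p(1) c(1)] p(2) by simp
  have d2: "dist (f c) (f x) = dist c x" using iso_d[OF f c(1) x] .
  have d3: "dist p (f x) = dist p x" using iso_d[OF f p(1) x] p(2) by simp
  have "btw p (f c) (f x)" using d1 d2 d3 c(2) unfolding btw_def by simp
  hence "f c = c" using uniq[OF p(1) fx fc c(1) _ c(3)] d1 by simp
  moreover have "dist x c = dist c (f x)" using c(2,3) d3 unfolding btw_def by (simp add: dist_commute)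
  ultimately show ?thesis using c(1,4) unfolding btw_def by (intro bexI[of _ c]) auto
qed

definition "line \<gamma> \<longleftrightarrow> range \<gamma> \<subseteq> T \<and> (\<forall>s t. dist (\<gamma> s) (\<gamma> t) = \<bar>s - t\<bar>)"

lemma line_pt_on: assumes "line \<gamma>" "z \<in> T" "lo \<le> hi" "btw (\<gamma> lo) z (\<gamma> hi)"
  shows "z = \<gamma> (lo + dist (\<gamma> lo) z)" "dist (\<gamma> lo) z \<le> hi - lo"
proof -
  have L: "\<And>s t. dist (\<gamma> s) (\<gamma> t) = \<bar>s - t\<bar>" "\<And>s. \<gamma> s \<in> T" using assms(1) unfolding line_def by auto
  have dz: "dist (\<gamma> lo) z \<le> hi - lo"
  proof -
    have "0 \<le> dist z (\<gamma> hi)" by simp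
    thus ?thesis using assms(4) L(1)[of lo hi] assms(3) unfolding btw_def by linarith
  qed
  thus "dist (\<gamma> lo) z \<le> hi - lo" .
  have "btw (\<gamma> lo) (\<gamma> (lo + dist (\<gamma> lo) z)) (\<gamma> hi)"
  proof -
    have "\<bar>lo - (lo + dist (\<gamma> lo) z)\<bar> = dist (\<gamma> lo) z" by simp
    moreover have "\<bar>lo + dist (\<gamma> lo) z - hi\<bar> = hi - lo - dist (\<gamma> lo) z" using dz by simp
    moreover have "\<bar>lo - hi\<bar> = hi - lo" using assms(3) by simp
    ultimately show ?thesis unfolding btw_def L(1) by linarith
  qed
  moreover have "dist (\<gamma> lo) (\<gamma> (lo + dist (\<gamma> lo) z)) = dist (\<gamma> lo) z" unfolding L(1) by simp
  ultimately show "z = \<gamma> (lo + dist (\<gamma> lo) z)"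
    using uniq[OF L(2) L(2) assms(2) L(2) assms(4)] by metis
qed

lemma proj_line: assumes "line \<gamma>" "p \<in> T"
  shows "\<exists>D t0. D \<ge> 0 \<and> (\<forall>t. dist p (\<gamma> t) = D + \<bar>t - t0\<bar>)"
proof -
  have L: "\<And>s t. dist (\<gamma> s) (\<gamma> t) = \<bar>s - t\<bar>" "\<And>s. \<gamma> s \<in> T" using assms(1) unfolding line_def by auto
  define \<phi> where "\<phi> t = dist p (\<gamma> t)" for t
  define R where "R = \<phi> 0"
  have cont: "isCont \<phi> x" for x
    unfolding isCont_def
  proof (rule metric_LIM_I)
    fix r :: real assume r: "0 < r"
    show "\<exists>s>0. \<forall>y. y \<noteq> x \<and> dist y x < s \<longrightarrow> dist (\<phi> y) (\<phi> x) < r"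
    proof (intro exI[of _ r] conjI allI impI)
      fix y assume "y \<noteq> x \<and> dist y x < r"
      hence y: "\<bar>y - x\<bar> < r" by (simp add: dist_real_def)
      have "dist p (\<gamma> y) \<le> dist p (\<gamma> x) + dist (\<gamma> x) (\<gamma> y)"
        "dist p (\<gamma> x) \<le> dist p (\<gamma> y) + dist (\<gamma> y) (\<gamma> x)" by (rule dist_triangle)+
      thus "dist (\<phi> y) (\<phi> x) < r" using y unfolding \<phi>_def L(1) dist_real_def by auto
    qed (rule r)
  qed
  have R0: "R \<ge> 0" unfolding R_def \<phi>_def by simp
  obtain t0 where t0: "t0 \<in> {-2*R-1..2*R+1}" "\<And>t. t \<in> {-2*R-1..2*R+1} \<Longrightarrow> \<phi> t0 \<le> \<phi> t"
  proof -
    have "-2*R-1 \<le> 2*R+1" using R0 by simp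
    from isCont_eq_Lb[OF this] cont obtain M where
      "(\<forall>x. -2*R-1 \<le> x \<and> x \<le> 2*R+1 \<longrightarrow> M \<le> \<phi> x)" "(\<exists>x. -2*R-1 \<le> x \<and> x \<le> 2*R+1 \<and> \<phi> x = M)"
      by blast
    thus ?thesis using that by auto
  qed
  have tmin: "\<phi> t0 \<le> \<phi> t" for t
  proof (cases "t \<in> {-2*R-1..2*R+1}")
    case True thus ?thesis using t0 by auto
  next
    case False
    have "dist (\<gamma> 0) (\<gamma> t) \<le> dist (\<gamma> 0) p + dist p (\<gamma> t)" by (rule dist_triangle)
    hence "\<phi> t \<ge> \<bar>t\<bar> - R" unfolding \<phi>_def R_def L(1) by (simp add: dist_commute)
    moreover have "\<phi> t0 \<le> R" using t0(2)[of 0] R0 unfolding R_def by auto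
    ultimately show ?thesis using False by auto
  qed
  have V: "\<phi> t = \<phi> t0 + \<bar>t - t0\<bar>" for t
  proof (cases "t = t0")
    case True thus ?thesis by simp
  next
    case False
    define lo where "lo = min t (2*t0 - t)"
    define hi where "hi = max t (2*t0 - t)"
    have lh: "lo \<le> t0" "t0 \<le> hi" "lo \<le> hi" unfolding lo_def hi_def by auto
    obtain c where c: "c \<in> T" "btw p c (\<gamma> lo)" "btw p c (\<gamma> hi)" "btw (\<gamma> lo) c (\<gamma> hi)"
      using center[OF assms(2) L(2) L(2)] by blast
    define u where "u = lo + dist (\<gamma> lo) c"
    have cu: "c = \<gamma> u" "u \<le> hi" "lo \<le> u" using line_pt_on[OF assms(1) c(1) lh(3) c(4)] unfolding u_def by auto
    have W: "\<phi> s = dist p c + \<bar>s - u\<bar>" if "lo \<le> s" "s \<le> hi" for s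
    proof -
      have t1: "dist p (\<gamma> s) \<le> dist p c + dist c (\<gamma> s)" "dist p (\<gamma> hi) \<le> dist p (\<gamma> s) + dist (\<gamma> s) (\<gamma> hi)"
        "dist p (\<gamma> lo) \<le> dist p (\<gamma> s) + dist (\<gamma> s) (\<gamma> lo)" by (rule dist_triangle)+
      show ?thesis using c(2,3) t1 cu that unfolding btw_def \<phi>_def L(1)
        by (cases "s \<le> u") (auto simp: L(1) dist_commute)
    qed
    have pt0: "\<phi> t0 = dist p c + \<bar>t0 - u\<bar>" using W lh by auto
    moreover have "\<phi> u = dist p c" using W cu by auto
    moreover note tmin[of u]
    ultimately have "u = t0" by auto
    moreover have "lo \<le> t" "t \<le> hi" unfolding lo_def hi_def by auto
    ultimately show ?thesis using W pt0 by auto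
  qed
  have "\<phi> t0 \<ge> 0" unfolding \<phi>_def by simp
  moreover have "\<forall>t. dist p (\<gamma> t) = \<phi> t0 + \<bar>t - t0\<bar>" using V unfolding \<phi>_def by blast
  ultimately show ?thesis by blast
qed

end



lemma iso_comp: "isometry T f \<Longrightarrow> isometry T g \<Longrightarrow> isometry T (f \<circ> g)"
proof -
  assume f: "isometry T f" and g: "isometry T g"
  have "(f \<circ> g) ` T = T" using f g unfolding isometry_def by (metis image_comp)
  moreover have "\<forall>x\<in>T. \<forall>y\<in>T. dist ((f \<circ> g) x) ((f \<circ> g) y) = dist x y"
  proof (intro ballI)
    fix x y assume "x \<in> T" "y \<in> T"
    thus "dist ((f \<circ> g) x) ((f \<circ> g) y) = dist x y"
      using iso_d[OF f] iso_d[OF g] iso_T[OF g] by simp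
  qed
  ultimately show ?thesis unfolding isometry_def by blast
qed

context rtree begin

lemma axis_line: "axis_param T f \<gamma> \<tau> \<Longrightarrow> line \<gamma>"
  unfolding axis_param_def line_def by auto

lemma axis_facts: assumes "axis_param T f \<gamma> \<tau>"
  shows "\<tau> > 0" "\<And>t. \<gamma> t \<in> T" "\<And>s t. dist (\<gamma> s) (\<gamma> t) = \<bar>s - t\<bar>" "\<And>t. f (\<gamma> t) = \<gamma> (t + \<tau>)"
  using assms unfolding axis_param_def by auto

lemma disp: assumes f: "isometry T f" and ax: "axis_param T f \<gamma> \<tau>" and p: "p \<in> T"
  and pr: "\<And>t. dist p (\<gamma> t) = D + \<bar>t - t0\<bar>"
  shows "dist p (f p) = 2*D + \<tau>" "\<And>t. dist (f p) (\<gamma> t) = D + \<bar>t - t0 - \<tau>\<bar>"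
proof -
  note A = axis_facts[OF ax]
  have fp: "f p \<in> T" using iso_T[OF f p] .
  show pr2: "dist (f p) (\<gamma> t) = D + \<bar>t - t0 - \<tau>\<bar>" for t
  proof -
    have "\<gamma> t = f (\<gamma> (t - \<tau>))" using A(4)[of "t - \<tau>"] by simp
    hence "dist (f p) (\<gamma> t) = dist p (\<gamma> (t - \<tau>))" using iso_d[OF f p A(2)] by simp
    thus ?thesis using pr[of "t - \<tau>"] by (simp add: algebra_simps)
  qed
  define N where "N = \<bar>t0\<bar> + \<tau> + 1"
  define a where "a = \<gamma> (-N)"
  define b where "b = \<gamma> N"
  have aT: "a \<in> T" "b \<in> T" unfolding a_def b_def using A(2) by auto
  have d1: "dist p a = D + N + t0" using pr[of "-N"] A(1) unfolding a_def N_def by auto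
  have d2: "dist p b = D + N - t0" using pr[of "N"] A(1) unfolding b_def N_def by auto
  have d3: "dist (f p) a = D + N + t0 + \<tau>" using pr2[of "-N"] A(1) unfolding a_def N_def by auto
  have d4: "dist (f p) b = D + N - t0 - \<tau>" using pr2[of "N"] A(1) unfolding b_def N_def by auto
  have d5: "dist a b = 2 * N" using A(3)[of "-N" N] A(1) unfolding a_def b_def N_def by auto
  have F1: "dist (f p) a + dist p b \<le> max (dist p (f p) + dist a b) (dist p a + dist (f p) b)"
    using FP[OF p fp aT(1) aT(2)] by (simp add: dist_commute)
  have F2: "dist a b + dist p (f p) \<le> max (dist p a + dist b (f p)) (dist p b + dist a (f p))"
    using FP[OF p aT(1) aT(2) fp] .
  have F1': "2*D + 2*N + \<tau> \<le> max (dist p (f p) + 2*N) (2*D + 2*N - \<tau>)"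
    using F1 unfolding d1 d2 d3 d4 d5 by simp
  have F2': "2*N + dist p (f p) \<le> max (2*D + 2*N - \<tau>) (2*D + 2*N + \<tau>)"
    using F2 unfolding dist_commute[of b "f p"] dist_commute[of a "f p"] d1 d2 d3 d4 d5 by simp
  show "dist p (f p) = 2*D + \<tau>" using F1' F2' A(1) unfolding max_def by (auto split: if_splits)
qed

lemma axis_not_ell: assumes f: "isometry T f" and ax: "axis_param T f \<gamma> \<tau>"
  shows "\<not> elliptic T f"
proof
  assume "elliptic T f"
  then obtain p where p: "p \<in> T" "f p = p" unfolding elliptic_def Fix_def by auto
  obtain D t0 where pr: "D \<ge> 0" "\<And>t. dist p (\<gamma> t) = D + \<bar>t - t0\<bar>"
    using proj_line[OF axis_line[OF ax] p(1)] by blast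
  have "dist p (f p) = 2*D + \<tau>" using disp[OF f ax p(1) pr(2)] by simp
  thus False using p(2) pr(1) axis_facts(1)[OF ax] by simp
qed

lemma axis_uniq: assumes f: "isometry T f" and ax: "axis_param T f \<gamma> \<tau>" and ax2: "axis_param T f \<gamma>' \<tau>'"
  shows "\<tau>' = \<tau>" "\<gamma>' s \<in> range \<gamma>"
proof -
  note A = axis_facts[OF ax] and A2 = axis_facts[OF ax2]
  define p where "p = \<gamma>' s"
  have p: "p \<in> T" unfolding p_def using A2(2) .
  obtain D t0 where pr: "D \<ge> 0" "\<And>t. dist p (\<gamma> t) = D + \<bar>t - t0\<bar>"
    using proj_line[OF axis_line[OF ax] p] by blast
  have ff: "isometry T (f \<circ> f)" using iso_comp[OF f f] .
  have ax3: "axis_param T (f \<circ> f) \<gamma> (2*\<tau>)" using ax unfolding axis_param_def by (auto simp: algebra_simps)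
  have e1: "dist p (f p) = 2*D + \<tau>" using disp[OF f ax p pr(2)] by simp
  have e2: "dist p ((f \<circ> f) p) = 2*D + 2*\<tau>" using disp[OF ff ax3 p pr(2)] by simp
  have e3: "dist p (f p) = \<tau>'" using A2(3,4) A2(1) unfolding p_def by simp
  have e4: "dist p ((f \<circ> f) p) = 2*\<tau>'" using A2(3,4) A2(1) unfolding p_def
    by (simp add: add.assoc)
  show "\<tau>' = \<tau>" using e1 e2 e3 e4 by simp
  have "D = 0" using e1 e2 e3 e4 by simp
  hence "dist p (\<gamma> t0) = 0" using pr(2)[of t0] by simp
  hence "\<gamma>' s = \<gamma> t0" unfolding p_def by simp
  thus "\<gamma>' s \<in> range \<gamma>" by (rule range_eqI)
qed

lemma tl_axis: assumes f: "isometry T f" and ax: "axis_param T f \<gamma> \<tau>"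
  shows "transl_len T f = \<tau>" "axis T f = range \<gamma>"
proof -
  have ne: "\<not> elliptic T f" using axis_not_ell[OF f ax] .
  have "(THE \<tau>. \<exists>\<gamma>. axis_param T f \<gamma> \<tau>) = \<tau>"
  proof (rule the_equality)
    show "\<exists>\<gamma>'. axis_param T f \<gamma>' \<tau>" using ax by blast
    fix \<tau>' assume "\<exists>\<gamma>'. axis_param T f \<gamma>' \<tau>'"
    then obtain \<gamma>' where "axis_param T f \<gamma>' \<tau>'" by blast
    thus "\<tau>' = \<tau>" using axis_uniq(1)[OF f ax] by blast
  qed
  thus "transl_len T f = \<tau>" unfolding transl_len_def using ne by simp
  have "(THE A. \<exists>\<gamma> \<tau>. axis_param T f \<gamma> \<tau> \<and> A = range \<gamma>) = range \<gamma>"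
  proof (rule the_equality)
    show "\<exists>\<gamma>' \<tau>'. axis_param T f \<gamma>' \<tau>' \<and> range \<gamma> = range \<gamma>'" using ax by blast
    fix A assume "\<exists>\<gamma>' \<tau>'. axis_param T f \<gamma>' \<tau>' \<and> A = range \<gamma>'"
    then obtain \<gamma>' \<tau>' where g: "axis_param T f \<gamma>' \<tau>'" "A = range \<gamma>'" by blast
    have "range \<gamma>' \<subseteq> range \<gamma>" using axis_uniq(2)[OF f ax g(1)] by auto
    moreover have "range \<gamma> \<subseteq> range \<gamma>'" using axis_uniq(2)[OF f g(1) ax] by auto
    ultimately show "A = range \<gamma>" using g(2) by auto
  qed
  thus "axis T f = range \<gamma>" unfolding axis_def .
qed

lemma tl_ell: "elliptic T f \<Longrightarrow> transl_len T f = 0"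
  unfolding transl_len_def by simp

end



lemma iso_pow: "isometry T f \<Longrightarrow> isometry T (f ^^ n)"
proof (induction n)
  case 0 thus ?case unfolding isometry_def by simp
next
  case (Suc n)
  have "f ^^ Suc n = f \<circ> f ^^ n" by simp
  thus ?case using iso_comp[of T f "f ^^ n"] Suc by metis
qed

lemma iso_inj: "isometry T f \<Longrightarrow> x \<in> T \<Longrightarrow> y \<in> T \<Longrightarrow> f x = f y \<Longrightarrow> x = y"
  using iso_d[of T f x y] by simp

context rtree begin

lemma T_ne: "T \<noteq> {}" using rt unfolding real_tree_def by simp

lemma lox_base: assumes f: "isometry T f" and ne: "\<not> elliptic T f"
  shows "\<exists>a\<in>T. \<exists>\<tau>>0. dist a (f a) = \<tau> \<and> dist a (f (f a)) = 2*\<tau>"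
proof -
  obtain x where x: "x \<in> T" using T_ne by blast
  have fx: "f x \<in> T" and ffx: "f (f x) \<in> T" using iso_T[OF f] x by auto
  define d where "d = dist x (f x)"
  have dff: "dist (f x) (f (f x)) = d" unfolding d_def using iso_d[OF f x fx] .
  define L where "L = d - dist x (f (f x)) / 2"
  have L0: "0 \<le> L" "L \<le> d" unfolding L_def using dist_triangle[of x "f (f x)" "f x"] dff
    by (auto simp: d_def dist_commute)
  show ?thesis
  proof (cases "d \<le> 2 * L")
    case True
    obtain m where m: "m \<in> T" "dist x m = d/2" "dist m (f x) = d - d/2"
      using pt_ex[OF x fx, of "d/2"] unfolding d_def by auto
    have "dist (f x) m + dist (f x) (f (f x)) - dist m (f (f x)) \<ge>
      min (dist (f x) m + dist (f x) x - dist m x) (dist (f x) (f (f x)) + dist (f x) x - dist (f (f x)) x)"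
      using FPg[OF fx m(1) ffx x] .
    hence "dist m (f (f x)) \<le> d/2" using m True dff unfolding L_def
      by (auto simp: dist_commute d_def min_def split: if_splits)
    moreover have "dist (f x) (f (f x)) \<le> dist (f x) m + dist m (f (f x))" by (rule dist_triangle)
    ultimately have b1: "btw (f x) m (f (f x))" using m dff unfolding btw_def by (simp add: dist_commute)
    have fm: "f m \<in> T" using iso_T[OF f m(1)] .
    have e1: "dist (f x) (f m) = d/2" using iso_d[OF f x m(1)] m(2) by simp
    have e2: "dist (f m) (f (f x)) = d/2" using iso_d[OF f m(1) fx] m(3) by simp
    have b2: "btw (f x) (f m) (f (f x))" using e1 e2 dff unfolding btw_def by simp
    have "f m = m" using uniq[OF fx ffx fm m(1) b2 b1] e1 m(3) by (simp add: dist_commute)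
    hence "elliptic T f" unfolding elliptic_def Fix_def using m(1) by auto
    thus ?thesis using ne by simp
  next
    case False
    define \<tau> where "\<tau> = d - 2*L"
    have tp: "\<tau> > 0" unfolding \<tau>_def using False by simp
    obtain a where a: "a \<in> T" "dist x a = L" "dist a (f x) = d - L"
      using pt_ex[OF x fx L0(1)] L0(2) unfolding d_def by auto
    have fa: "f a \<in> T" and ffa: "f (f a) \<in> T" using iso_T[OF f] a(1) by auto
    have fa1: "dist (f x) (f a) = L" using iso_d[OF f x a(1)] a(2) by simp
    have fa2: "dist (f a) (f (f x)) = d - L" using iso_d[OF f a(1) fx] a(3) by simp
    have xffx: "dist x (f (f x)) = 2*d - 2*L" unfolding L_def by simp
    have G1: "dist (f x) a + dist (f x) (f (f x)) - dist a (f (f x)) \<ge>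
      min (dist (f x) a + dist (f x) x - dist a x) (dist (f x) (f (f x)) + dist (f x) x - dist (f (f x)) x)"
      using FPg[OF fx a(1) ffx x] .
    have G2: "dist (f x) x + dist (f x) (f (f x)) - dist x (f (f x)) \<ge>
      min (dist (f x) x + dist (f x) a - dist x a) (dist (f x) (f (f x)) + dist (f x) a - dist (f (f x)) a)"
      using FPg[OF fx x ffx a(1)] .
    have Paf: "dist a (f (f x)) = 2*d - 3*L" 
      using G1 G2 a dff False xffx
      by (auto simp: dist_commute d_def min_def split: if_splits)
    have G3: "dist (f x) a + dist (f x) (f a) - dist a (f a) \<ge>
      min (dist (f x) a + dist (f x) (f (f x)) - dist a (f (f x))) (dist (f x) (f a) + dist (f x) (f (f x)) - dist (f a) (f (f x)))"
      using FPg[OF fx a(1) fa ffx] .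
    have t1: "dist (f x) a \<le> dist (f x) (f a) + dist (f a) a" by (rule dist_triangle)
    have daf: "dist a (f a) = \<tau>"
      using G3 t1 Paf a fa1 fa2 dff False unfolding \<tau>_def
      by (auto simp: dist_commute min_def split: if_splits)
    have G4: "dist (f x) x + dist (f x) (f a) - dist x (f a) \<ge>
      min (dist (f x) x + dist (f x) (f (f x)) - dist x (f (f x))) (dist (f x) (f a) + dist (f x) (f (f x)) - dist (f a) (f (f x)))"
      using FPg[OF fx x fa ffx] .
    have t2: "dist (f x) x \<le> dist (f x) (f a) + dist (f a) x" by (rule dist_triangle)
    have dxfa: "dist x (f a) = d - L"
      using G4 t2 fa1 fa2 dff xffx False
      by (auto simp: dist_commute d_def min_def split: if_splits)
    have h1: "dist (f a) (f (f a)) = \<tau>" using iso_d[OF f a(1) fa] daf by simp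
    have h2: "dist (f (f a)) (f (f x)) = L" using iso_d[OF f fa fx] fa1 by (simp add: dist_commute)
    have H1: "dist (f a) x + dist (f a) (f (f x)) - dist x (f (f x)) \<ge>
      min (dist (f a) x + dist (f a) a - dist x a) (dist (f a) (f (f x)) + dist (f a) a - dist (f (f x)) a)"
      using FPg[OF fa x ffx a(1)] .
    have H2: "dist (f a) a + dist (f a) (f (f x)) - dist a (f (f x)) \<ge>
      min (dist (f a) a + dist (f a) (f (f a)) - dist a (f (f a))) (dist (f a) (f (f x)) + dist (f a) (f (f a)) - dist (f (f x)) (f (f a)))"
      using FPg[OF fa a(1) ffx ffa] .
    have "dist a (f (f a)) \<ge> 2*\<tau>"
      using H1 H2 dxfa fa2 xffx a daf h1 h2 tp unfolding \<tau>_def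
      by (auto simp: dist_commute min_def split: if_splits)
    moreover have "dist a (f (f a)) \<le> dist a (f a) + dist (f a) (f (f a))" by (rule dist_triangle)
    ultimately have "dist a (f (f a)) = 2*\<tau>" using daf h1 by simp
    thus ?thesis using a(1) tp daf by blast
  qed
qed

end



context rtree begin

lemma chain_nat: assumes f: "isometry T f" and a: "a \<in> T" and tp: "\<tau> > 0"
  and d1: "dist a (f a) = \<tau>" and d2: "dist a (f (f a)) = 2*\<tau>"
  shows "dist a ((f ^^ n) a) = real n * \<tau>"
proof -
  have PT: "(f ^^ m) a \<in> T" for m using iso_T[OF iso_pow[OF f] a] .
  have "dist a ((f ^^ n) a) = real n * \<tau> \<and> dist a ((f ^^ Suc n) a) = real (Suc n) * \<tau>"
  proof (induction n)
    case 0 thus ?case using d1 by simp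
  next
    case (Suc n)
    define q where "q = (f ^^ n) a"
    define r where "r = (f ^^ Suc n) a"
    define s where "s = (f ^^ Suc (Suc n)) a"
    have qT: "q \<in> T" "r \<in> T" "s \<in> T" unfolding q_def r_def s_def by (rule PT)+
    have fa: "f a \<in> T" "f (f a) \<in> T" using iso_T[OF f] a by auto
    have rq: "r = (f ^^ n) (f a)" unfolding r_def funpow_Suc_right by simp
    have sq: "s = (f ^^ n) (f (f a))" unfolding s_def funpow_Suc_right by simp
    have e1: "dist q r = \<tau>" using iso_d[OF iso_pow[OF f] a fa(1), of n] d1 unfolding q_def rq by simp
    have e2: "dist q s = 2*\<tau>" using iso_d[OF iso_pow[OF f] a fa(2), of n] d2 unfolding q_def sq by simp
    have e3: "dist r s = \<tau>"
    proof -
      have "s = f r" unfolding s_def r_def by simp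
      moreover have "dist r (f r) = \<tau>" using iso_d[OF iso_pow[OF f] a fa(1), of "Suc n"] d1
        unfolding r_def funpow_Suc_right[of n f] by (simp add: funpow_swap1)
      ultimately show ?thesis by simp
    qed
    have IH: "dist a q = real n * \<tau>" "dist a r = real (Suc n) * \<tau>" using Suc unfolding q_def r_def by auto
    have G: "dist r q + dist r s - dist q s \<ge> min (dist r q + dist r a - dist q a) (dist r s + dist r a - dist s a)"
      using FPg[OF qT(2) qT(1) qT(3) a] .
    have "dist a s \<ge> real (Suc (Suc n)) * \<tau>"
      using G e1 e2 e3 IH tp by (auto simp: dist_commute min_def algebra_simps split: if_splits)
    moreover have "dist a s \<le> dist a r + dist r s" by (rule dist_triangle)
    ultimately have "dist a s = real (Suc (Suc n)) * \<tau>" using IH e3 by (simp add: algebra_simps)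
    thus ?case using IH unfolding s_def q_def r_def by simp
  qed
  thus ?thesis by simp
qed

lemma chain_nat2: assumes f: "isometry T f" and a: "a \<in> T" and tp: "\<tau> > 0"
  and d1: "dist a (f a) = \<tau>" and d2: "dist a (f (f a)) = 2*\<tau>"
  shows "dist ((f ^^ i) a) ((f ^^ j) a) = \<bar>real i - real j\<bar> * \<tau>"
proof -
  have PT: "(f ^^ m) a \<in> T" for m using iso_T[OF iso_pow[OF f] a] .
  have *: "dist ((f ^^ i) a) ((f ^^ j) a) = (real j - real i) * \<tau>" if "i \<le> j" for i j
  proof -
    have "(f ^^ j) a = (f ^^ i) ((f ^^ (j - i)) a)" using that
      by (metis funpow_add comp_apply le_add_diff_inverse)
    hence "dist ((f ^^ i) a) ((f ^^ j) a) = dist a ((f ^^ (j - i)) a)"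
      using iso_d[OF iso_pow[OF f] a PT, of i "j - i"] by simp
    thus ?thesis using chain_nat[OF assms, of "j - i"] that by (simp add: of_nat_diff)
  qed
  show ?thesis
  proof (cases "i \<le> j")
    case True thus ?thesis using * by simp
  next
    case False thus ?thesis using *[of j i] by (simp add: dist_commute)
  qed
qed

definition "pt u v r = (SOME z. z \<in> T \<and> dist u z = r \<and> dist z v = dist u v - r)"

lemma pt_prop: "u \<in> T \<Longrightarrow> v \<in> T \<Longrightarrow> 0 \<le> r \<Longrightarrow> r \<le> dist u v \<Longrightarrow>
  pt u v r \<in> T \<and> dist u (pt u v r) = r \<and> dist (pt u v r) v = dist u v - r"
proof -
  assume "u \<in> T" "v \<in> T" "0 \<le> r" "r \<le> dist u v"
  then obtain z where "z \<in> T \<and> dist u z = r \<and> dist z v = dist u v - r" using pt_ex by blast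
  thus ?thesis unfolding pt_def by (rule someI)
qed

lemma lox_axis: assumes f: "isometry T f" and ne: "\<not> elliptic T f"
  shows "\<exists>\<gamma> \<tau>. axis_param T f \<gamma> \<tau>"
proof -
  obtain a \<tau> where a: "a \<in> T" "\<tau> > 0" "dist a (f a) = \<tau>" "dist a (f (f a)) = 2*\<tau>"
    using lox_base[OF f ne] by blast
  note tp = a(2)
  define g where "g = inv_into T f"
  have fT: "f ` T = T" using f unfolding isometry_def by simp
  have gT: "y \<in> T \<Longrightarrow> g y \<in> T" for y unfolding g_def using inv_into_into[of y f T] fT by simp
  have fg: "y \<in> T \<Longrightarrow> f (g y) = y" for y unfolding g_def using f_inv_into_f[of y f T] fT by simp
  have gpT: "(g ^^ n) a \<in> T" for n by (induction n) (auto simp: a gT)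
  have fpT: "(f ^^ n) a \<in> T" for n using iso_T[OF iso_pow[OF f] a(1)] .
  define P where "P k = (if 0 \<le> k then (f ^^ nat k) a else (g ^^ nat (-k)) a)" for k :: int
  have PT: "P k \<in> T" for k unfolding P_def using gpT fpT by auto
  have Pshift: "f (P k) = P (k + 1)" for k
  proof (cases "0 \<le> k")
    case True
    hence "nat (k + 1) = Suc (nat k)" by simp
    thus ?thesis unfolding P_def using True by simp
  next
    case False
    have "nat (-k) = Suc (nat (-(k+1)))" using False by simp
    hence "P k = g ((g ^^ nat (-(k+1))) a)" unfolding P_def using False by simp
    moreover have "(g ^^ nat (-(k+1))) a = P (k + 1)" unfolding P_def using False by auto
    ultimately show ?thesis using fg PT by simp
  qed
  have Pm: "dist (P (i + int m)) (P (j + int m)) = dist (P i) (P j)" for i j m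
  proof (induction m)
    case 0 thus ?case by simp
  next
    case (Suc m)
    have "i + int (Suc m) = (i + int m) + 1" "j + int (Suc m) = (j + int m) + 1" by simp_all
    hence "P (i + int (Suc m)) = f (P (i + int m))" "P (j + int (Suc m)) = f (P (j + int m))"
      using Pshift by metis+
    thus ?case using Suc iso_d[OF f PT PT] by simp
  qed
  have Pd: "dist (P i) (P j) = \<bar>of_int i - of_int j\<bar> * \<tau>" for i j
  proof -
    define m where "m = nat (max (-i) (-j))"
    have i0: "0 \<le> i + int m" "0 \<le> j + int m" unfolding m_def by auto
    have "dist (P (i + int m)) (P (j + int m)) = \<bar>real (nat (i + int m)) - real (nat (j + int m))\<bar> * \<tau>"
      using chain_nat2[OF f a] i0 unfolding P_def by simp
    also have "\<dots> = \<bar>of_int i - of_int j\<bar> * \<tau>" using i0 by simp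
    finally show ?thesis using Pm by simp
  qed
  define k where "k t = \<lfloor>t / \<tau>\<rfloor>" for t
  define r where "r t = t - of_int (k t) * \<tau>" for t
  have r0: "0 \<le> r t" "r t < \<tau>" for t
    unfolding r_def k_def using floor_divide_lower[OF tp, of t] floor_divide_upper[OF tp, of t]
    by (auto simp: algebra_simps)
  define \<gamma> where "\<gamma> t = pt (P (k t)) (P (k t + 1)) (r t)" for t
  have PP: "dist (P k') (P (k' + 1)) = \<tau>" for k' using Pd[of k' "k' + 1"] by simp
  have G1: "\<gamma> t \<in> T \<and> dist (P (k t)) (\<gamma> t) = r t \<and> dist (\<gamma> t) (P (k t + 1)) = \<tau> - r t" for t
    using pt_prop[OF PT PT, of "r t" "k t" "k t + 1"] r0[of t] PP unfolding \<gamma>_def by auto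
  have G2: "dist (P m) (\<gamma> t) = t - of_int m * \<tau> \<and> dist (\<gamma> t) (P n) = of_int n * \<tau> - t"
    if "m \<le> k t" "k t + 1 \<le> n" for m n t
  proof -
    have t1: "dist (P m) (\<gamma> t) \<le> dist (P m) (P (k t)) + dist (P (k t)) (\<gamma> t)"
      "dist (\<gamma> t) (P n) \<le> dist (\<gamma> t) (P (k t + 1)) + dist (P (k t + 1)) (P n)"
      "dist (P m) (P n) \<le> dist (P m) (\<gamma> t) + dist (\<gamma> t) (P n)" by (rule dist_triangle)+
    have e: "dist (P m) (P (k t)) = (of_int (k t) - of_int m) * \<tau>"
      "dist (P (k t + 1)) (P n) = (of_int n - of_int (k t) - 1) * \<tau>"
      "dist (P m) (P n) = (of_int n - of_int m) * \<tau>"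
      using Pd that tp by (auto simp: abs_if algebra_simps)
    show ?thesis using t1 e G1[of t] unfolding r_def by (auto simp: algebra_simps)
  qed
  have iso: "dist (\<gamma> s) (\<gamma> t) = \<bar>s - t\<bar>" if "s \<le> t" for s t
  proof -
    have kst: "k s \<le> k t" unfolding k_def using that tp by (intro floor_mono divide_right_mono) auto
    have b1: "btw (P (k s)) (\<gamma> s) (P (k t + 1))" "btw (P (k s)) (\<gamma> t) (P (k t + 1))"
      using G2[of "k s" s "k t + 1"] G2[of "k s" t "k t + 1"] kst Pd[of "k s" "k t + 1"] tp
      unfolding btw_def by (auto simp: abs_if algebra_simps)
    have "dist (\<gamma> s) (\<gamma> t) = \<bar>dist (P (k s)) (\<gamma> s) - dist (P (k s)) (\<gamma> t)\<bar>"
      using segdist[OF PT PT _ _ b1] G1 by blast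
    thus ?thesis using G2[of "k s" s "k t + 1"] G2[of "k s" t "k t + 1"] kst by auto
  qed
  have ksh: "k (t + \<tau>) = k t + 1" for t unfolding k_def using tp
    by (simp add: add_divide_distrib floor_add_int[symmetric])
  have rsh: "r (t + \<tau>) = r t" for t unfolding r_def ksh[of t] by (simp add: algebra_simps)
  have shift: "f (\<gamma> t) = \<gamma> (t + \<tau>)" for t
  proof -
    have fT1: "f (\<gamma> t) \<in> T" using iso_T[OF f] G1 by blast
    have a1: "dist (P (k t + 1)) (f (\<gamma> t)) = r t" using iso_d[OF f PT, of "\<gamma> t" "k t"] G1[of t] Pshift by simp
    have a2: "dist (f (\<gamma> t)) (P (k t + 2)) = \<tau> - r t"
      using iso_d[OF f _ PT, of "\<gamma> t" "k t + 1"] G1[of t] Pshift[of "k t + 1"] by (simp add: add.assoc)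
    have b1: "btw (P (k t + 1)) (f (\<gamma> t)) (P (k t + 2))" using a1 a2 PP[of "k t + 1"]
      unfolding btw_def by (simp add: add.assoc)
    have b2: "btw (P (k t + 1)) (\<gamma> (t + \<tau>)) (P (k t + 2))" using G1[of "t + \<tau>"] PP[of "k t + 1"]
      unfolding btw_def ksh rsh by (simp add: add.assoc)
    show ?thesis using uniq[OF PT PT fT1 _ b1 b2] G1[of "t + \<tau>"] a1 unfolding ksh rsh by simp
  qed
  have "axis_param T f \<gamma> \<tau>"
    unfolding axis_param_def using tp G1 shift iso
    by (auto simp: abs_minus_commute dist_commute) (metis abs_minus_commute dist_commute iso linorder_linear)
  thus ?thesis by blast
qed

end



context rtree begin

lemma tl_nonneg: assumes "isometry T k" shows "transl_len T k \<ge> 0"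
proof (cases "elliptic T k")
  case True thus ?thesis using tl_ell by simp
next
  case False
  then obtain \<gamma> \<tau> where "axis_param T k \<gamma> \<tau>" using lox_axis[OF assms] by blast
  thus ?thesis using tl_axis[OF assms] axis_facts(1) by force
qed

lemma disp_gen: assumes k: "isometry T k" and y: "y \<in> T"
  shows "\<exists>\<pi>\<in>T. k \<pi> \<in> T \<and>
    dist y \<pi> = (dist y (k y) - transl_len T k)/2 \<and>
    dist \<pi> (k y) = (dist y (k y) + transl_len T k)/2 \<and>
    dist y (k \<pi>) = (dist y (k y) + transl_len T k)/2 \<and>
    dist (k \<pi>) (k y) = (dist y (k y) - transl_len T k)/2"
proof (cases "elliptic T k")
  case True
  then obtain p where p: "p \<in> T" "k p = p" unfolding elliptic_def Fix_def by auto
  obtain m where m: "m \<in> T" "k m = m" "dist y m = dist y (k y) / 2" "dist m (k y) = dist y (k y) / 2"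
    using ell_mid[OF k p y] by blast
  show ?thesis using m tl_ell[OF True] by (intro bexI[of _ m]) auto
next
  case False
  then obtain \<delta> \<tau> where ax: "axis_param T k \<delta> \<tau>" using lox_axis[OF k] by blast
  have tl: "transl_len T k = \<tau>" using tl_axis[OF k ax] by simp
  note A = axis_facts[OF ax]
  obtain D t0 where pr: "D \<ge> 0" "\<And>t. dist y (\<delta> t) = D + \<bar>t - t0\<bar>"
    using proj_line[OF axis_line[OF ax] y] by blast
  note ds = disp[OF k ax y pr(2)]
  have "k (\<delta> t0) = \<delta> (t0 + \<tau>)" using A(4) .
  thus ?thesis using A(1,2) pr(2)[of t0] pr(2)[of "t0 + \<tau>"] ds(1) ds(2)[of t0] ds(2)[of "t0 + \<tau>"] tl
    by (intro bexI[of _ "\<delta> t0"]) (auto simp: dist_commute)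
qed

lemma crease_from_fix:
  assumes f: "isometry T f" and k: "isometry T k" and ax: "axis_param T f \<delta> \<tau>f"
    and lt: "transl_len T k < \<tau>f" and x: "x \<in> T" and kfx: "k (f x) = x"
  shows "creases_neg T f k ((\<tau>f - transl_len T k) / 2)"
proof -
  define \<tau>k where "\<tau>k = transl_len T k"
  have tk0: "\<tau>k \<ge> 0" unfolding \<tau>k_def using tl_nonneg[OF k] .
  note A = axis_facts[OF ax]
  define y where "y = f x"
  have yT: "y \<in> T" unfolding y_def using iso_T[OF f x] .
  obtain Df t0 where pr: "Df \<ge> 0" "\<And>t. dist x (\<delta> t) = Df + \<bar>t - t0\<bar>"
    using proj_line[OF axis_line[OF ax] x] by blast
  note ds = disp[OF f ax x pr(2)]
  define G where "G = dist x y"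
  have G: "G = 2*Df + \<tau>f" unfolding G_def y_def using ds(1) .
  have dy: "dist y (\<delta> t) = Df + \<bar>t - t0 - \<tau>f\<bar>" for t unfolding y_def using ds(2) .
  have ky: "k y = x" unfolding y_def using kfx .
  obtain \<pi> where pi: "\<pi> \<in> T" "k \<pi> \<in> T" "dist y \<pi> = (G - \<tau>k)/2" "dist \<pi> x = (G + \<tau>k)/2"
      "dist y (k \<pi>) = (G + \<tau>k)/2" "dist (k \<pi>) x = (G - \<tau>k)/2"
    using disp_gen[OF k yT] unfolding ky G_def \<tau>k_def by (auto simp: dist_commute)
  define ln where "ln = (\<tau>f - \<tau>k)/2"
  define a where "a = t0 + \<tau>f/2 + \<tau>k/2"
  have l0: "ln \<ge> 0" unfolding ln_def \<tau>k_def using lt by simp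
  have pia: "\<pi> = \<delta> a"
  proof -
    have b1: "btw y \<pi> x" using pi unfolding btw_def G_def by (simp add: dist_commute)
    have e1: "dist y (\<delta> a) = (G - \<tau>k)/2" using dy[of a] lt G tk0 unfolding a_def \<tau>k_def by simp
    have e2: "dist (\<delta> a) x = (G + \<tau>k)/2" using pr(2)[of a] lt G tk0 unfolding a_def \<tau>k_def
      by (simp add: dist_commute)
    have b2: "btw y (\<delta> a) x" using e1 e2 unfolding btw_def G_def by (simp add: dist_commute)
    show ?thesis using uniq[OF yT x pi(1) A(2) b1 b2] pi(3) e1 by simp
  qed
  have main: "k (\<delta> (a + s)) = \<delta> (t0 + ln - s)" if s: "s \<in> {0..ln}" for s
  proof -
    define z where "z = \<delta> (a + s)"
    have zT: "z \<in> T" "k z \<in> T" unfolding z_def using A(2) iso_T[OF k A(2)] by auto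
    have ez1: "dist y z = (G - \<tau>k)/2 - s" using dy[of "a+s"] s G unfolding z_def a_def ln_def by auto
    have ez2: "dist z \<pi> = s" using A(3)[of "a+s" a] s unfolding z_def pia by simp
    have k1: "dist x (k z) = (G - \<tau>k)/2 - s" using iso_d[OF k yT zT(1)] ez1 ky by simp
    have k2: "dist (k z) (k \<pi>) = s" using iso_d[OF k zT(1) pi(1)] ez2 by simp
    have t: "dist (k z) y \<le> dist (k z) (k \<pi>) + dist (k \<pi>) y" "dist x y \<le> dist x (k z) + dist (k z) y"
      by (rule dist_triangle)+
    have b1: "btw x (k z) y" using t k1 k2 pi(5) unfolding btw_def G_def by (auto simp: dist_commute field_simps)
    define w where "w = \<delta> (t0 + ln - s)"
    have w1: "dist x w = (G - \<tau>k)/2 - s" using pr(2)[of "t0 + ln - s"] s G unfolding w_def ln_def by auto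
    have w2: "dist w y = G - ((G - \<tau>k)/2 - s)" using dy[of "t0 + ln - s"] s G l0 tk0 A(1)
      unfolding w_def ln_def by (auto simp: dist_commute abs_if field_simps)
    have b2: "btw x w y" using w1 w2 unfolding btw_def G_def by simp
    show ?thesis using uniq[OF x yT zT(2) A(2) b1 b2[unfolded w_def]] k1 w1 unfolding z_def w_def by simp
  qed
  show ?thesis unfolding creases_neg_def
  proof (intro exI conjI)
    show "axis_param T f \<delta> \<tau>f" by (rule ax)
    show "a \<le> a + ln" using l0 by simp
    show "(\<tau>f - transl_len T k) / 2 \<le> a + ln - a" unfolding ln_def \<tau>k_def by simp
    show "t0 + (a + ln - a) \<le> a" unfolding a_def ln_def using tk0 by simp
    show "\<forall>s\<in>{0..a + ln - a}. k (\<delta> (a + s)) = \<delta> (t0 + (a + ln - a) - s)" using main by simp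
  qed
qed

end



context rtree begin

lemma fix_from_crease:
  assumes f: "isometry T f" and k: "isometry T k" and ax: "axis_param T f \<gamma> \<tau>"
    and lt: "transl_len T k < \<tau>" and ab: "a \<le> b" and len: "(\<tau> - transl_len T k)/2 \<le> b - a"
    and cb: "c + (b - a) \<le> a" and cr: "\<forall>s\<in>{0..b - a}. k (\<gamma> (a + s)) = \<gamma> (c + (b - a) - s)"
  shows "\<exists>w\<in>T. f (k w) = w"
proof -
  define \<tau>k where "\<tau>k = transl_len T k"
  have tk0: "\<tau>k \<ge> 0" unfolding \<tau>k_def using tl_nonneg[OF k] .
  note A = axis_facts[OF ax]
  define ln where "ln = b - a"
  define x where "x = \<gamma> a"
  have xT: "x \<in> T" "k x \<in> T" unfolding x_def using A(2) iso_T[OF k A(2)] by auto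
  have kx: "k x = \<gamma> (c + ln)" using cr ab unfolding x_def ln_def by (metis add.right_neutral atLeastAtMost_iff diff_ge_0_iff_ge diff_zero order_refl)
  define G where "G = dist x (k x)"
  have "G = dist (\<gamma> a) (\<gamma> (c + ln))" unfolding G_def using kx x_def by simp
  hence G: "G = a - c - ln" unfolding A(3) using cb unfolding ln_def by simp
  obtain \<pi> where pi: "\<pi> \<in> T" "k \<pi> \<in> T" "dist x \<pi> = (G - \<tau>k)/2" "dist \<pi> (k x) = (G + \<tau>k)/2"
      "dist x (k \<pi>) = (G + \<tau>k)/2" "dist (k \<pi>) (k x) = (G - \<tau>k)/2"
    using disp_gen[OF k xT(1)] unfolding G_def \<tau>k_def by blast
  have Gtk: "G \<ge> \<tau>k"
  proof -
    have "0 \<le> dist x \<pi>" by simp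
    thus ?thesis using pi(3) by (simp add: field_simps)
  qed
  show ?thesis
  proof (cases "G \<le> \<tau>")
    case True
    define s where "s = (\<tau> - G)/2"
    have s: "s \<in> {0..b - a}" unfolding s_def using True Gtk len unfolding \<tau>k_def by auto
    have "f (k (\<gamma> (a + s))) = \<gamma> (c + ln - s + \<tau>)" using cr s A(4) unfolding ln_def by simp
    also have "c + ln - s + \<tau> = a + s" unfolding s_def G by (simp add: field_simps)
    finally show ?thesis using A(2) by blast
  next
    case False
    define t1 where "t1 = a - G/2 + \<tau>/2"
    define w where "w = \<gamma> t1"
    define u where "u = \<gamma> (t1 - \<tau>)"
    have wT: "w \<in> T" "k w \<in> T" "u \<in> T" unfolding w_def u_def using A(2) iso_T[OF k A(2)] by auto
    have w1: "dist x w = (G - \<tau>)/2" unfolding x_def w_def A(3) t1_def using False by simp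
    have G0: "0 \<le> G" unfolding G_def by simp
    have w2: "dist w (k x) = (G + \<tau>)/2" unfolding kx w_def A(3) t1_def using False G A(1) G0 by (simp add: abs_if field_simps)
    have bw: "btw x w (k x)" using w1 w2 unfolding btw_def G_def by (simp add: field_simps)
    have bp: "btw x \<pi> (k x)" using pi(3,4) unfolding btw_def G_def by (simp add: field_simps)
    have dwp: "dist w \<pi> = (G - \<tau>k)/2 - (G - \<tau>)/2"
      using segdist[OF xT wT(1) pi(1) bw bp] w1 pi(3) lt unfolding \<tau>k_def by simp
    have k1: "dist (k x) (k w) = (G - \<tau>)/2" using iso_d[OF k xT(1) wT(1)] w1 by simp
    have k2: "dist (k w) (k \<pi>) = (G - \<tau>k)/2 - (G - \<tau>)/2" using iso_d[OF k wT(1) pi(1)] dwp by simp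
    have t: "dist (k w) x \<le> dist (k w) (k \<pi>) + dist (k \<pi>) x" "dist (k x) x \<le> dist (k x) (k w) + dist (k w) x"
      by (rule dist_triangle)+
    have b1: "btw (k x) (k w) x" using t k1 k2 pi(5) unfolding btw_def G_def
      by (auto simp: dist_commute field_simps)
    have u1: "dist (k x) u = (G - \<tau>)/2" unfolding kx u_def A(3) t1_def using False G by (simp add: abs_if field_simps)
    have u2: "dist u x = (G + \<tau>)/2" unfolding x_def u_def A(3) t1_def using False G A(1) G0 by (simp add: abs_if field_simps)
    have b2: "btw (k x) u x" using u1 u2 unfolding btw_def G_def by (simp add: dist_commute field_simps)
    have "k w = u" using uniq[OF xT(2) xT(1) wT(2) wT(3) b1 b2] k1 u1 by simp
    hence "f (k w) = w" unfolding u_def w_def using A(4)[of "t1 - \<tau>"] by simp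
    thus ?thesis using wT(1) by blast
  qed
qed

lemma both_ell: assumes g: "isometry T g" and h: "isometry T h" and eg: "elliptic T g" and eh: "elliptic T h"
  and p: "p \<in> T" and gh: "g (h p) = p"
  shows "Fix T g \<inter> Fix T h \<noteq> {}"
proof -
  obtain pg where pg: "pg \<in> T" "g pg = pg" using eg unfolding elliptic_def Fix_def by auto
  obtain ph where ph: "ph \<in> T" "h ph = ph" using eh unfolding elliptic_def Fix_def by auto
  have hp: "h p \<in> T" using iso_T[OF h p] .
  obtain m where m: "m \<in> T" "h m = m" "dist p m = dist p (h p) / 2" "dist m (h p) = dist p (h p) / 2"
    using ell_mid[OF h ph p] by blast
  obtain m' where m': "m' \<in> T" "g m' = m'" "dist (h p) m' = dist (h p) p / 2" "dist m' p = dist (h p) p / 2"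
    using ell_mid[OF g pg hp] gh by auto
  have b1: "btw p m (h p)" using m unfolding btw_def by simp
  have b2: "btw p m' (h p)" using m' unfolding btw_def by (simp add: dist_commute)
  have "m = m'" using uniq[OF p hp m(1) m'(1) b1 b2] m(3) m'(4) by (simp add: dist_commute)
  thus ?thesis using m m' unfolding Fix_def by auto
qed

lemma lox_eq: assumes g: "isometry T g" and h: "isometry T h"
  and axg: "axis_param T g \<gamma> \<tau>" and axh: "axis_param T h \<delta> \<tau>"
  and p: "p \<in> T" and gh: "g (h p) = p"
  shows "ereal \<tau> \<le> arc_len (range \<gamma> \<inter> range \<delta>)" "opposite_directions T g h"
proof -
  note A = axis_facts[OF axg] and B = axis_facts[OF axh]
  define q where "q = h p"
  have qT: "q \<in> T" unfolding q_def using iso_T[OF h p] .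
  have gq: "g q = p" unfolding q_def using gh .
  obtain D1 t0 where pr1: "D1 \<ge> 0" "\<And>t. dist q (\<gamma> t) = D1 + \<bar>t - t0\<bar>"
    using proj_line[OF axis_line[OF axg] qT] by blast
  note d1 = disp[OF g axg qT pr1(2)]
  obtain D2 u0 where pr2: "D2 \<ge> 0" "\<And>t. dist p (\<delta> t) = D2 + \<bar>t - u0\<bar>"
    using proj_line[OF axis_line[OF axh] p] by blast
  note d2 = disp[OF h axh p pr2(2)]
  have DD: "D1 = D2" using d1(1) d2(1) gq unfolding q_def by (simp add: dist_commute)
  have e1: "\<gamma> t0 = \<delta> (u0 + \<tau>)"
  proof -
    have b1: "btw q (\<gamma> t0) p" using pr1(2)[of t0] d1(2)[of t0] d1(1) gq A(1) unfolding btw_def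
      by (simp add: dist_commute abs_if)
    have b2: "btw q (\<delta> (u0 + \<tau>)) p" using pr2(2)[of "u0 + \<tau>"] d2(2)[of "u0 + \<tau>"] d1(1) gq DD B(1)
      unfolding btw_def q_def by (simp add: dist_commute abs_if)
    show ?thesis using uniq[OF qT p A(2) B(2) b1 b2] pr1(2)[of t0] d2(2)[of "u0 + \<tau>"] DD unfolding q_def by simp
  qed
  have e2: "\<gamma> (t0 + \<tau>) = \<delta> u0"
  proof -
    have b1: "btw q (\<gamma> (t0 + \<tau>)) p" using pr1(2)[of "t0+\<tau>"] d1(2)[of "t0+\<tau>"] d1(1) gq A(1) unfolding btw_def
      by (simp add: dist_commute abs_if)
    have b2: "btw q (\<delta> u0) p" using pr2(2)[of "u0"] d2(2)[of "u0"] d1(1) gq DD B(1)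
      unfolding btw_def q_def by (simp add: dist_commute abs_if)
    show ?thesis using uniq[OF qT p A(2) B(2) b1 b2] pr1(2)[of "t0+\<tau>"] d2(2)[of "u0"] DD A(1)
      unfolding q_def by simp
  qed
  have "ereal (dist (\<gamma> t0) (\<gamma> (t0 + \<tau>))) \<le> arc_len (range \<gamma> \<inter> range \<delta>)"
    unfolding arc_len_def
  proof (rule SUP_upper2[of "\<gamma> t0"])
    show "\<gamma> t0 \<in> range \<gamma> \<inter> range \<delta>" using e1 by (metis IntI rangeI)
    show "ereal (dist (\<gamma> t0) (\<gamma> (t0 + \<tau>))) \<le> (SUP y\<in>range \<gamma> \<inter> range \<delta>. ereal (dist (\<gamma> t0) y))"
      by (rule SUP_upper) (metis IntI rangeI e2)
  qed
  thus "ereal \<tau> \<le> arc_len (range \<gamma> \<inter> range \<delta>)" using A(3)[of t0 "t0 + \<tau>"] A(1) by simp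
  have key: "u = u0 + \<tau> + t0 - s" if "\<gamma> s = \<delta> u" for s u
  proof -
    have h1: "\<bar>s - t0\<bar> = \<bar>u - (u0 + \<tau>)\<bar>" using A(3)[of s t0] B(3)[of u "u0 + \<tau>"] that e1 by simp
    have h2: "\<bar>s - (t0 + \<tau>)\<bar> = \<bar>u - u0\<bar>" using A(3)[of s "t0 + \<tau>"] B(3)[of u u0] that e2 by simp
    show ?thesis using h1 h2 A(1) by (auto simp: abs_if split: if_splits)
  qed
  show "opposite_directions T g h" unfolding opposite_directions_def
  proof (intro exI conjI allI impI)
    show "axis_param T g \<gamma> \<tau>" by (rule axg)
    show "axis_param T h \<delta> \<tau>" by (rule axh)
    fix s t u v assume "\<gamma> s = \<delta> u \<and> \<gamma> t = \<delta> v \<and> s < t"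
    thus "v < u" using key[of s u] key[of t v] by auto
  qed
qed

end



context rtree begin

lemma fix_from_opp: assumes g: "isometry T g" and h: "isometry T h"
  and opp: "opposite_directions T g h" and eq: "transl_len T g = transl_len T h"
  and arc: "ereal (transl_len T g) \<le> arc_len (axis T g \<inter> axis T h)"
  shows "\<exists>w\<in>T. g (h w) = w"
proof -
  obtain \<gamma> \<sigma> \<delta> \<rho> where axg: "axis_param T g \<gamma> \<sigma>" and axh: "axis_param T h \<delta> \<rho>"
    and op: "\<And>s t u v. \<gamma> s = \<delta> u \<Longrightarrow> \<gamma> t = \<delta> v \<Longrightarrow> s < t \<Longrightarrow> v < u"
    using opp unfolding opposite_directions_def by blast
  note A = axis_facts[OF axg] and B = axis_facts[OF axh]
  have tg: "transl_len T g = \<sigma>" "axis T g = range \<gamma>" using tl_axis[OF g axg] by auto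
  have th: "transl_len T h = \<rho>" "axis T h = range \<delta>" using tl_axis[OF h axh] by auto
  have sr: "\<rho> = \<sigma>" using eq tg th by simp
  define \<tau> where "\<tau> = \<sigma>"
  have tp: "\<tau> > 0" unfolding \<tau>_def using A(1) .
  define S where "S = range \<gamma> \<inter> range \<delta>"
  have arc': "ereal \<tau> \<le> arc_len S" using arc unfolding tg th S_def \<tau>_def .
  have Sne: "S \<noteq> {}"
  proof
    assume "S = {}"
    hence "arc_len S = -\<infinity>" unfolding arc_len_def by (simp add: bot_ereal_def)
    thus False using arc' by simp
  qed
  then obtain s0 u0 where s0: "\<gamma> s0 = \<delta> u0" unfolding S_def by auto
  define K where "K = u0 + s0"
  have Jc: "u = K - s" if "\<gamma> s = \<delta> u" for s u
  proof -
    have d: "\<bar>u - u0\<bar> = \<bar>s - s0\<bar>" using A(3)[of s s0] B(3)[of u u0] that s0 by simp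
    consider "s < s0" | "s = s0" | "s0 < s" by linarith
    thus ?thesis
    proof cases
      case 1 thus ?thesis using op[OF that s0 1] d unfolding K_def by auto
    next
      case 2 thus ?thesis using d unfolding K_def by auto
    next
      case 3 thus ?thesis using op[OF s0 that 3] d unfolding K_def by auto
    qed
  qed
  define J where "J = {s. \<gamma> s = \<delta> (K - s)}"
  have s0J: "s0 \<in> J" unfolding J_def K_def using s0 by simp
  have conv: "r \<in> J" if "s \<in> J" "t \<in> J" "s \<le> r" "r \<le> t" for s t r
  proof -
    have b1: "btw (\<gamma> s) (\<gamma> r) (\<gamma> t)" unfolding btw_def A(3) using that by simp
    have e1: "dist (\<gamma> s) (\<delta> (K - r)) = r - s" using that(1,3) B(3) unfolding J_def by simp
    have e2: "dist (\<delta> (K - r)) (\<gamma> t) = t - r" using that(2,4) B(3) unfolding J_def by simp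
    have b2: "btw (\<gamma> s) (\<delta> (K - r)) (\<gamma> t)" unfolding btw_def A(3) using e1 e2 that by simp
    have "\<gamma> r = \<delta> (K - r)" using uniq[OF A(2) A(2) A(2) B(2) b1 b2] e1 A(3)[of s r] that by simp
    thus ?thesis unfolding J_def by simp
  qed
  have "\<exists>s\<in>J. s + \<tau> \<in> J"
  proof (rule ccontr)
    assume H: "\<not> ?thesis"
    have lt: "t - s < \<tau>" if "s \<in> J" "t \<in> J" for s t
    proof (rule ccontr)
      assume "\<not> t - s < \<tau>"
      hence "s + \<tau> \<in> J" using conv[OF that(1) that(2), of "s + \<tau>"] tp by simp
      thus False using H that(1) by blast
    qed
    have b1: "t \<le> s0 + \<tau>" if "t \<in> J" for t using lt[OF s0J that] by simp
    have b2: "s0 - \<tau> \<le> t" if "t \<in> J" for t using lt[OF that s0J] by simp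
    have bdd: "bdd_above J" "bdd_below J"
      using b1 b2 unfolding bdd_above_def bdd_below_def by blast+
    define M where "M = Sup J"
    define m where "m = Inf J"
    have JM: "s \<le> M" "m \<le> s" if "s \<in> J" for s
      unfolding M_def m_def using that bdd by (auto intro: cSup_upper cInf_lower)
    have MJ: "M \<in> J"
    proof -
      have E: "dist (\<gamma> M) (\<delta> (K - M)) \<le> 2 * e" if "e > 0" for e
      proof -
        have "M - e < Sup J" using that unfolding M_def by simp
        then obtain t where t: "t \<in> J" "M - e < t" using s0J less_cSupE[of "M - e" J] by blast
        have gt: "\<gamma> t = \<delta> (K - t)" using t(1) unfolding J_def by simp
        have "dist (\<gamma> M) (\<delta> (K - M)) \<le> dist (\<gamma> M) (\<gamma> t) + dist (\<delta> (K - t)) (\<delta> (K - M))"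
          using dist_triangle[of "\<gamma> M" "\<delta> (K - M)" "\<gamma> t"] unfolding gt .
        also have "\<dots> = 2 * (M - t)" unfolding A(3) B(3) using JM(1)[OF t(1)] by simp
        finally show ?thesis using t by simp
      qed
      have "\<not> dist (\<gamma> M) (\<delta> (K - M)) > 0"
      proof
        assume p: "dist (\<gamma> M) (\<delta> (K - M)) > 0"
        from E[of "dist (\<gamma> M) (\<delta> (K - M)) / 4"] p show False by simp
      qed
      thus ?thesis unfolding J_def by simp
    qed
    have mJ: "m \<in> J"
    proof -
      have E: "dist (\<gamma> m) (\<delta> (K - m)) \<le> 2 * e" if "e > 0" for e
      proof -
        have "Inf J < m + e" using that unfolding m_def by simp
        then obtain t where t: "t \<in> J" "t < m + e" using s0J cInf_lessD[of J "m + e"] by blast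
        have gt: "\<gamma> t = \<delta> (K - t)" using t(1) unfolding J_def by simp
        have "dist (\<gamma> m) (\<delta> (K - m)) \<le> dist (\<gamma> m) (\<gamma> t) + dist (\<delta> (K - t)) (\<delta> (K - m))"
          using dist_triangle[of "\<gamma> m" "\<delta> (K - m)" "\<gamma> t"] unfolding gt .
        also have "\<dots> = 2 * (t - m)" unfolding A(3) B(3) using JM(2)[OF t(1)] by simp
        finally show ?thesis using t by simp
      qed
      have "\<not> dist (\<gamma> m) (\<delta> (K - m)) > 0"
      proof
        assume p: "dist (\<gamma> m) (\<delta> (K - m)) > 0"
        from E[of "dist (\<gamma> m) (\<delta> (K - m)) / 4"] p show False by simp
      qed
      thus ?thesis unfolding J_def by simp
    qed
    have Mm: "M - m < \<tau>" using lt[OF mJ MJ] .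
    have inJ: "s \<in> J" if rr: "\<gamma> s \<in> range \<delta>" for s
    proof -
      obtain u where u: "\<gamma> s = \<delta> u" using rr by (rule rangeE)
      have "u = K - s" using Jc[OF u] .
      thus ?thesis using u unfolding J_def by simp
    qed
    have "arc_len S \<le> ereal (M - m)" unfolding arc_len_def
    proof (intro SUP_least)
      fix x y assume x: "x \<in> S" and y: "y \<in> S"
      obtain s where s: "x = \<gamma> s" "s \<in> J" using x inJ unfolding S_def by auto
      obtain t where t: "y = \<gamma> t" "t \<in> J" using y inJ unfolding S_def by auto
      have "dist x y = \<bar>s - t\<bar>" using s t A(3) by simp
      also have "\<dots> \<le> M - m" using JM[OF s(2)] JM[OF t(2)] by auto
      finally show "ereal (dist x y) \<le> ereal (M - m)" by simp
    qed
    hence "ereal \<tau> \<le> ereal (M - m)" using arc' by (rule order_trans[rotated])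
    thus False using Mm by simp
  qed
  then obtain s where s: "s \<in> J" "s + \<tau> \<in> J" by blast
  define w where "w = \<gamma> (s + \<tau>)"
  have "h w = \<delta> (K - (s + \<tau>) + \<tau>)" using s(2) B(4) sr unfolding w_def J_def \<tau>_def by simp
  also have "\<dots> = \<gamma> s" using s(1) unfolding J_def by simp
  finally have "g (h w) = w" using A(4) unfolding w_def \<tau>_def by simp
  thus ?thesis using A(2) unfolding w_def by blast
qed

end



theorem proposition2p15:
  fixes T :: "'a::metric_space set" and g h :: "'a \<Rightarrow> 'a"
  assumes "real_tree T" and "isometry T g" and "isometry T h"
  shows "elliptic T (g \<circ> h) \<longleftrightarrow>
    (elliptic T g \<and> elliptic T h \<and> Fix T g \<inter> Fix T h \<noteq> {})
  \<or> (transl_len T h < transl_len T g \<and>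
       creases_neg T g h ((transl_len T g - transl_len T h) / 2))
  \<or> (transl_len T g < transl_len T h \<and>
       creases_neg T h g ((transl_len T h - transl_len T g) / 2))
  \<or> (loxodromic T g \<and> loxodromic T h \<and> transl_len T g = transl_len T h \<and>
       ereal (transl_len T g) \<le> arc_len (axis T g \<inter> axis T h) \<and>
       opposite_directions T g h)"
proof -
  interpret R: rtree T by unfold_locales (rule assms(1))
  note g = assms(2) and h = assms(3)
  have ghT: "isometry T (g \<circ> h)" using iso_comp[OF g h] .
  have ell_iff: "elliptic T (g \<circ> h) \<longleftrightarrow> (\<exists>p\<in>T. g (h p) = p)"
    unfolding elliptic_def Fix_def by auto
  show ?thesis (is "_ \<longleftrightarrow> ?rhs")
  proof
    assume "elliptic T (g \<circ> h)"
    then obtain p where p: "p \<in> T" "g (h p) = p" using ell_iff by blast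
    have hp: "h p \<in> T" using iso_T[OF h p(1)] .
    show "?rhs" (is "?A \<or> ?B \<or> ?C \<or> ?D")
    proof (cases "elliptic T g \<and> elliptic T h")
      case True
      hence ?A using R.both_ell[OF g h _ _ p] by blast
      thus ?thesis by blast
    next
      case False
      consider "transl_len T h < transl_len T g" | "transl_len T g < transl_len T h"
        | "transl_len T g = transl_len T h" by linarith
      thus ?thesis
      proof cases
        case 1
        have "\<not> elliptic T g" using 1 R.tl_ell R.tl_nonneg[OF h] by force
        then obtain \<gamma> \<tau> where ax: "axis_param T g \<gamma> \<tau>" using R.lox_axis[OF g] by blast
        have tg: "transl_len T g = \<tau>" using R.tl_axis[OF g ax] by simp
        have "h (g (h p)) = h p" using p by simp
        hence ?B using R.crease_from_fix[OF g h ax _ hp] 1 tg by simp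
        thus ?thesis by blast
      next
        case 2
        have "\<not> elliptic T h" using 2 R.tl_ell R.tl_nonneg[OF g] by force
        then obtain \<gamma> \<tau> where ax: "axis_param T h \<gamma> \<tau>" using R.lox_axis[OF h] by blast
        have th: "transl_len T h = \<tau>" using R.tl_axis[OF h ax] by simp
        have ?C using R.crease_from_fix[OF h g ax _ p(1)] 2 th p(2) by simp
        thus ?thesis by blast
      next
        case 3
        have lg: "\<not> elliptic T g" and lh: "\<not> elliptic T h"
        proof -
          have pos: "\<not> elliptic T k \<Longrightarrow> isometry T k \<Longrightarrow> transl_len T k > 0" for k
          proof -
            assume "\<not> elliptic T k" "isometry T k"
            then obtain \<gamma> \<tau> where ax: "axis_param T k \<gamma> \<tau>" using R.lox_axis by blast
            thus ?thesis using R.tl_axis[OF \<open>isometry T k\<close> ax] R.axis_facts(1)[OF ax] by simp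
          qed
          show "\<not> elliptic T g" using False 3 pos[OF _ h] pos[OF _ g] R.tl_ell by force
          show "\<not> elliptic T h" using False 3 pos[OF _ h] pos[OF _ g] R.tl_ell by force
        qed
        obtain \<gamma> \<sigma> where axg: "axis_param T g \<gamma> \<sigma>" using R.lox_axis[OF g lg] by blast
        obtain \<delta> \<rho> where axh: "axis_param T h \<delta> \<rho>" using R.lox_axis[OF h lh] by blast
        have tg: "transl_len T g = \<sigma>" "axis T g = range \<gamma>" using R.tl_axis[OF g axg] by auto
        have th: "transl_len T h = \<rho>" "axis T h = range \<delta>" using R.tl_axis[OF h axh] by auto
        have sr: "\<rho> = \<sigma>" using 3 tg th by simp
        note L = R.lox_eq[OF g h axg axh[unfolded sr] p]
        have ?D unfolding loxodromic_def using lg lh 3 L tg th by simp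
        thus ?thesis by blast
      qed
    qed
  next
    assume "?rhs"
    then consider (A) "elliptic T g \<and> elliptic T h \<and> Fix T g \<inter> Fix T h \<noteq> {}"
      | (B) "transl_len T h < transl_len T g \<and> creases_neg T g h ((transl_len T g - transl_len T h) / 2)"
      | (C) "transl_len T g < transl_len T h \<and> creases_neg T h g ((transl_len T h - transl_len T g) / 2)"
      | (D) "loxodromic T g \<and> loxodromic T h \<and> transl_len T g = transl_len T h \<and>
       ereal (transl_len T g) \<le> arc_len (axis T g \<inter> axis T h) \<and> opposite_directions T g h"
      by blast
    thus "elliptic T (g \<circ> h)"
    proof cases
      case A
      then obtain p where p: "p \<in> T" "g p = p" "h p = p" unfolding Fix_def by auto
      hence "g (h p) = p" by simp
      thus ?thesis using ell_iff p(1) by blast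
    next
      case B
      then obtain \<gamma> \<tau> a b c where cr: "axis_param T g \<gamma> \<tau>" "a \<le> b"
        "(transl_len T g - transl_len T h) / 2 \<le> b - a" "c + (b - a) \<le> a"
        "\<forall>s\<in>{0..b - a}. h (\<gamma> (a + s)) = \<gamma> (c + (b - a) - s)"
        unfolding creases_neg_def by blast
      have tg: "transl_len T g = \<tau>" using R.tl_axis[OF g cr(1)] by simp
      obtain w where "w \<in> T" "g (h w) = w"
        using R.fix_from_crease[OF g h cr(1) _ cr(2) _ cr(4) cr(5)] B cr(3) tg by auto
      thus ?thesis using ell_iff by auto
    next
      case C
      then obtain \<gamma> \<tau> a b c where cr: "axis_param T h \<gamma> \<tau>" "a \<le> b"
        "(transl_len T h - transl_len T g) / 2 \<le> b - a" "c + (b - a) \<le> a"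
        "\<forall>s\<in>{0..b - a}. g (\<gamma> (a + s)) = \<gamma> (c + (b - a) - s)"
        unfolding creases_neg_def by blast
      have th: "transl_len T h = \<tau>" using R.tl_axis[OF h cr(1)] by simp
      obtain w where w: "w \<in> T" "h (g w) = w"
        using R.fix_from_crease[OF h g cr(1) _ cr(2) _ cr(4) cr(5)] C cr(3) th by auto
      have "g w \<in> T" "g (h (g w)) = g w" using iso_T[OF g w(1)] w(2) by auto
      thus ?thesis using ell_iff by blast
    next
      case D
      obtain w where "w \<in> T" "g (h w) = w" using R.fix_from_opp[OF g h] D by blast
      thus ?thesis using ell_iff by auto
    qed
  qed
qed



end
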